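(* Let $a,q,t_1,\dots,t_m$ be complex numbers ($m\ge1$), let $F(z)=(1-az)\prod_{i=1}^{m}(1-t_iz)=\sum_{n\ge0}a_nz^n$, and for $k\ge0$ let $F_k(z)=\sum_{i=0}^ka_iz^i$ (so $F_k=F$ for $k\ge m+1$). Then $$\prod_{i=1}^{m}(1-t_iz)=\sum_{n=0}^\infty\frac{c_nz^{n}}{1-azq^n}$$ in $\mathbb{C}[[z]]$, where $c_0=1$ and for $n\ge1$, $$c_n=\sum_{k=0}^{\min\{m,n-1\}}g_{n-k}(q)\,q^{(n-k)k}\,[z^{n}]\Big\{\prod_{i=1}^{m}(1-t_iz)-\frac{F_k(z)}{1-az}\Big\},$$ with polynomials $g_n(q)$ ($n\ge1$) defined recursively by $g_n(q)=1-\sum_{i=1}^{n-1}g_{n-i}(q)\,q^{(n-i)i}$.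
   Context: $[z^m]\{f\}$ denotes the coefficient of $z^m$ in the formal power series $f$; $1/(1-az)$ and $1/(1-azq^n)$ are expanded as geometric series in $z$. Empty sums are $0$. *)

theory Defs
  imports "HOL-Computational_Algebra.Formal_Power_Series"
begin

text \<open>The polynomials g_n(q), n \<ge> 1, evaluated at a complex number q:
  g_n(q) = 1 - sum_{i=1}^{n-1} g_{n-i}(q) q^{(n-i) i}.  (The value at n = 0 is irrelevant.)\<close>
function gpoly :: "complex \<Rightarrow> nat \<Rightarrow> complex" where
  "gpoly q n = 1 - (\<Sum>i\<in>{1..<n}. gpoly q (n - i) * q ^ ((n - i) * i))"
  by auto
termination
  by (relation "measure (\<lambda>(q, n). n)") auto

definition fps_trunc :: "'a::zero fps \<Rightarrow> nat \<Rightarrow> 'a fps" where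
  "fps_trunc F k = Abs_fps (\<lambda>i. if i \<le> k then fps_nth F i else 0)"

end

theory Submission
  imports Defs
begin

unbundle fps_syntax

declare gpoly.simps[simp del]

lemma swap_tri:
  assumes "finite A" "finite B"
  shows "(\<Sum>k\<in>A. \<Sum>i\<in>{i\<in>B. R k i}. f k i) = (\<Sum>i\<in>B. \<Sum>k\<in>{k\<in>A. R k i}. (f k i :: 'a::comm_monoid_add))"
  using assms by (simp add: sum.inter_filter sum.swap[of _ A B])

lemma G1:
  assumes "M \<ge> 1"
  shows "(\<Sum>l=1..M. gpoly q l * q ^ (l * (M - l))) = 1"
proof -
  have r: "gpoly q M = 1 - (\<Sum>i\<in>{1..<M}. gpoly q (M - i) * q ^ ((M - i) * i))"
    by (subst gpoly.simps) simp
  have "(\<Sum>i\<in>{1..<M}. gpoly q (M - i) * q ^ ((M - i) * i)) = (\<Sum>l\<in>{1..<M}. gpoly q l * q ^ (l * (M - l)))"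
    by (rule sum.reindex_bij_witness[where i="\<lambda>l. M - l" and j="\<lambda>i. M - i"]) auto
  moreover have "{1..M} = insert M {1..<M}" using assms by auto
  ultimately show ?thesis using r by simp
qed

definition HH :: "complex \<Rightarrow> nat \<Rightarrow> nat \<Rightarrow> complex" where
  "HH q j i = (\<Sum>k<i. gpoly q (j - k) * q ^ ((j - k) * k))"

lemma HH_diag: "i \<ge> 1 \<Longrightarrow> HH q i i = 1"
proof -
  assume i: "i \<ge> 1"
  have "HH q i i = (\<Sum>l=1..i. gpoly q l * q ^ (l * (i - l)))"
    unfolding HH_def
    by (rule sum.reindex_bij_witness[where i="\<lambda>l. i - l" and j="\<lambda>k. i - k"]) (auto simp: mult.commute)
  with G1[OF i] show ?thesis by simp
qed

lemma S1:
  assumes "1 \<le> i" "i \<le> n"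
  shows "(\<Sum>j=i..n. HH q j i * q ^ (j * (n - j))) = 1"
  using assms
proof (induction i rule: dec_induct)
  case base
  have "(\<Sum>j=1..n. HH q j 1 * q ^ (j * (n - j))) = (\<Sum>j=1..n. gpoly q j * q ^ (j * (n - j)))"
    by (simp add: HH_def)
  also have "\<dots> = 1" using G1[of n q] assms by simp
  finally show ?case .
next
  case (step i)
  have e1: "(\<Sum>j=i..n. HH q j i * q ^ (j * (n - j))) = q ^ (i * (n - i)) + (\<Sum>j=Suc i..n. HH q j i * q ^ (j * (n - j)))"
    using step HH_diag[of i q] by (simp add: sum.atLeast_Suc_atMost)
  have e2: "(\<Sum>j=Suc i..n. gpoly q (j - i) * q ^ ((j - i) * i) * q ^ (j * (n - j)))
      = q ^ (i * (n - i)) * (\<Sum>l=1..n-i. gpoly q l * q ^ (l * (n - i - l)))"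
  proof -
    have "(\<Sum>j=Suc i..n. gpoly q (j - i) * q ^ ((j - i) * i) * q ^ (j * (n - j)))
        = (\<Sum>l=1..n-i. gpoly q l * q ^ (l * i) * q ^ ((l + i) * (n - (l + i))))"
      by (rule sum.reindex_bij_witness[where i="\<lambda>l. l + i" and j="\<lambda>j. j - i"]) auto
    also have "\<dots> = (\<Sum>l=1..n-i. q ^ (i * (n - i)) * (gpoly q l * q ^ (l * (n - i - l))))"
    proof (rule sum.cong)
      fix l assume "l \<in> {1..n-i}"
      then have "l * i + (l + i) * (n - (l + i)) = i * (n - i) + l * (n - i - l)"
      proof -
        assume l: "l \<in> {1..n-i}"
        have il: "i + l \<le> n" using l by auto
        define r where "r = n - (i + l)"
        have r: "n = i + l + r" using il unfolding r_def by simp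
        show ?thesis unfolding r by (simp add: algebra_simps)
      qed
      then have pw: "q ^ (l * i) * q ^ ((l + i) * (n - (l + i))) = q ^ (i * (n - i)) * q ^ (l * (n - i - l))"
        by (simp only: power_add[symmetric])
      have "gpoly q l * q ^ (l * i) * q ^ ((l + i) * (n - (l + i))) = gpoly q l * (q ^ (l * i) * q ^ ((l + i) * (n - (l + i))))"
        by (simp only: mult.assoc)
      also have "\<dots> = gpoly q l * (q ^ (i * (n - i)) * q ^ (l * (n - i - l)))" by (simp only: pw)
      also have "\<dots> = q ^ (i * (n - i)) * (gpoly q l * q ^ (l * (n - i - l)))" by (simp only: mult.left_commute)
      finally show "gpoly q l * q ^ (l * i) * q ^ ((l + i) * (n - (l + i))) = q ^ (i * (n - i)) * (gpoly q l * q ^ (l * (n - i - l)))" .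
    qed simp
    finally show ?thesis by (simp add: sum_distrib_left)
  qed
  have "(\<Sum>j=Suc i..n. HH q j (Suc i) * q ^ (j * (n - j)))
     = (\<Sum>j=Suc i..n. HH q j i * q ^ (j * (n - j))) + (\<Sum>j=Suc i..n. gpoly q (j - i) * q ^ ((j - i) * i) * q ^ (j * (n - j)))"
  proof -
    have "\<And>j. HH q j (Suc i) * q ^ (j * (n - j)) = HH q j i * q ^ (j * (n - j)) + gpoly q (j - i) * q ^ ((j - i) * i) * q ^ (j * (n - j))"
      by (simp add: HH_def distrib_right)
    then show ?thesis by (simp only: sum.distrib[symmetric])
  qed
  also have "\<dots> = 1"
  proof -
    have g: "(\<Sum>l=1..n-i. gpoly q l * q ^ (l * (n - i - l))) = 1" using step by (intro G1) auto
    have ih: "(\<Sum>j=i..n. HH q j i * q ^ (j * (n - j))) = 1" using step by simp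
    show ?thesis using e1 e2 ih unfolding g by (simp add: add.commute)
  qed
  finally show ?case .
qed

lemma cc_form:
  fixes e :: "nat \<Rightarrow> complex"
  assumes j: "j \<ge> 1"
  shows "(\<Sum>k<j. gpoly q (j-k) * q^((j-k)*k) * (\<Sum>i\<in>{k<..j}. e i * A^(j-i)))
         = (\<Sum>i\<in>{1..j}. e i * A^(j-i) * HH q j i)"
proof -
  have "(\<Sum>k<j. gpoly q (j-k) * q^((j-k)*k) * (\<Sum>i\<in>{k<..j}. e i * A^(j-i)))
      = (\<Sum>k\<in>{..<j}. \<Sum>i\<in>{i\<in>{1..j}. k < i}. gpoly q (j-k) * q^((j-k)*k) * (e i * A^(j-i)))"
  proof (rule sum.cong)
    fix k assume "k \<in> {..<j}"
    have "{k<..j} = {i\<in>{1..j}. k < i}" by auto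
    then show "gpoly q (j-k) * q^((j-k)*k) * (\<Sum>i\<in>{k<..j}. e i * A^(j-i)) = (\<Sum>i\<in>{i\<in>{1..j}. k < i}. gpoly q (j-k) * q^((j-k)*k) * (e i * A^(j-i)))"
      by (simp add: sum_distrib_left)
  qed simp
  also have "\<dots> = (\<Sum>i\<in>{1..j}. \<Sum>k\<in>{k\<in>{..<j}. k < i}. gpoly q (j-k) * q^((j-k)*k) * (e i * A^(j-i)))"
    by (rule swap_tri) auto
  also have "\<dots> = (\<Sum>i\<in>{1..j}. e i * A^(j-i) * HH q j i)"
  proof (rule sum.cong)
    fix i assume "i \<in> {1..j}"
    then have "{k\<in>{..<j}. k < i} = {..<i}" by auto
    then show "(\<Sum>k\<in>{k\<in>{..<j}. k < i}. gpoly q (j-k) * q^((j-k)*k) * (e i * A^(j-i))) = e i * A^(j-i) * HH q j i"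
      by (simp add: HH_def sum_distrib_left sum_distrib_right mult_ac)
  qed simp
  finally show ?thesis .
qed

lemma key:
  fixes e cc :: "nat \<Rightarrow> complex"
  assumes c0: "cc 0 = e 0"
    and cn: "\<And>j. j \<ge> 1 \<Longrightarrow> cc j = (\<Sum>k<j. gpoly q (j-k) * q^((j-k)*k) * (\<Sum>i\<in>{k<..j}. e i * A^(j-i)))"
  shows "(\<Sum>j\<le>n. cc j * (A*q^j)^(n-j)) = (\<Sum>i\<le>n. e i * A^(n-i))"
proof -
  have split: "{..n} = insert 0 {1..n}" by auto
  have "(\<Sum>j\<in>{1..n}. cc j * (A*q^j)^(n-j))
      = (\<Sum>j\<in>{1..n}. \<Sum>i\<in>{i\<in>{1..n}. i \<le> j}. e i * A^(n-i) * (HH q j i * q ^ (j * (n - j))))"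
  proof (rule sum.cong)
    fix j assume j: "j \<in> {1..n}"
    then have s: "{i\<in>{1..n}. i \<le> j} = {1..j}" by auto
    have "cc j * (A*q^j)^(n-j) = (\<Sum>i\<in>{1..j}. e i * A^(j-i) * HH q j i) * (A^(n-j) * q^(j*(n-j)))"
      using j cn[of j] cc_form[of j q e A] by (simp add: power_mult_distrib power_mult)
    also have "\<dots> = (\<Sum>i\<in>{1..j}. e i * A^(n-i) * (HH q j i * q ^ (j * (n - j))))"
      unfolding sum_distrib_right
    proof (rule sum.cong)
      fix i assume i: "i \<in> {1..j}"
      have "A^(j-i) * A^(n-j) = A^(n-i)" using i j by (simp add: power_add[symmetric])
      then show "e i * A ^ (j - i) * HH q j i * (A ^ (n - j) * q ^ (j * (n - j))) = e i * A ^ (n - i) * (HH q j i * q ^ (j * (n - j)))"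
        by (metis (no_types, lifting) mult.assoc mult.left_commute)
    qed simp
    finally show "cc j * (A*q^j)^(n-j) = (\<Sum>i\<in>{i\<in>{1..n}. i \<le> j}. e i * A^(n-i) * (HH q j i * q ^ (j * (n - j))))"
      using s by simp
  qed simp
  also have "\<dots> = (\<Sum>i\<in>{1..n}. \<Sum>j\<in>{j\<in>{1..n}. i \<le> j}. e i * A^(n-i) * (HH q j i * q ^ (j * (n - j))))"
    by (rule swap_tri) auto
  also have "\<dots> = (\<Sum>i\<in>{1..n}. e i * A^(n-i))"
  proof (rule sum.cong)
    fix i assume i: "i \<in> {1..n}"
    then have "{j\<in>{1..n}. i \<le> j} = {i..n}" by auto
    then show "(\<Sum>j\<in>{j\<in>{1..n}. i \<le> j}. e i * A^(n-i) * (HH q j i * q ^ (j * (n - j)))) = e i * A^(n-i)"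
      using S1[of i n q] i by (simp add: sum_distrib_left[symmetric])
  qed simp
  finally have "(\<Sum>j\<in>{1..n}. cc j * (A*q^j)^(n-j)) = (\<Sum>i\<in>{1..n}. e i * A^(n-i))" .
  then show ?thesis unfolding split using c0 by simp
qed

lemma inv_gp: "inverse (1 - fps_const (b::complex) * fps_X) = Abs_fps (\<lambda>n. b^n)"
proof (rule fps_inverse_unique)
  have "(1 - fps_const b * fps_X) * Abs_fps (\<lambda>n. b^n) = Abs_fps (\<lambda>n. b^n) - fps_const b * (fps_X * Abs_fps (\<lambda>n. b^n))"
    by (simp add: algebra_simps)
  also have "\<dots> = 1"
    by (auto simp: fps_eq_iff power_Suc[symmetric] simp del: power_Suc)
  finally show "(1 - fps_const b * fps_X) * Abs_fps (\<lambda>n. b^n) = 1" .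
qed

lemma mult_inv_nth: "(G * inverse (1 - fps_const (b::complex) * fps_X)) $ n = (\<Sum>i\<le>n. G $ i * b^(n-i))"
  by (simp add: inv_gp fps_mult_nth atLeast0AtMost)

lemma term_nth: "(fps_const (c::complex) * fps_X^j * inverse (1 - fps_const B * fps_X)) $ n = (if j \<le> n then c * B^(n-j) else 0)"
proof -
  have "fps_const c * fps_X^j * inverse (1 - fps_const B * fps_X) = fps_const c * (fps_X^j * Abs_fps (\<lambda>n. B^n))"
    by (simp add: inv_gp mult.assoc)
  then show ?thesis by (simp only: fps_mult_left_const_nth fps_X_power_mult_nth) simp
qed

lemma lin_factor: "f * (1 - fps_const (c::complex) * fps_X) = f - fps_const c * (fps_X * f)"
  by (simp add: algebra_simps)

lemma prod_props:
  "(\<Prod>i=1..m. 1 - fps_const (t i :: complex) * fps_X) $ 0 = 1 \<and>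
   (\<forall>j>m. (\<Prod>i=1..m. 1 - fps_const (t i) * fps_X) $ j = 0)"
proof (induction m)
  case 0
  then show ?case by simp
next
  case (Suc m)
  have eq: "(\<Prod>i=1..Suc m. 1 - fps_const (t i) * fps_X) = (\<Prod>i=1..m. 1 - fps_const (t i) * fps_X) * (1 - fps_const (t (Suc m)) * fps_X)"
    by simp
  show ?case unfolding eq lin_factor using Suc by auto
qed

theorem corollary2p5:
  fixes a q :: complex and t :: "nat \<Rightarrow> complex" and m :: nat and c :: "nat \<Rightarrow> complex"
    and P F :: "complex fps"
  assumes "m \<ge> 1"
    and P_def: "P = (\<Prod>i=1..m. 1 - fps_const (t i) * fps_X)"
    and F_def: "F = (1 - fps_const a * fps_X) * P"
    and c0: "c 0 = 1"
    and cn: "\<And>n. n \<ge> 1 \<Longrightarrow> c n =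
      (\<Sum>k=0..min m (n - 1). gpoly q (n - k) * q ^ ((n - k) * k) *
         fps_nth (P - fps_trunc F k * inverse (1 - fps_const a * fps_X)) n)"
  shows "(\<lambda>n. fps_const (c n) * fps_X ^ n * inverse (1 - fps_const (a * q ^ n) * fps_X)) sums P"
proof -
  define e where "e = fps_nth F"
  have e_eq: "\<And>i. F $ i = e i" by (simp add: e_def)
  have P0: "P $ 0 = 1" and Pz: "\<And>j. j > m \<Longrightarrow> P $ j = 0" using prod_props[of t m] P_def by auto
  have FP: "F = P - fps_const a * (fps_X * P)" unfolding F_def by (simp add: algebra_simps)
  have e0: "e 0 = 1" using P0 by (simp add: e_def FP)
  have ez: "\<And>j. j > Suc m \<Longrightarrow> e j = 0" using Pz by (simp add: e_def FP)
  have PF: "P = F * inverse (1 - fps_const a * fps_X)"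
  proof -
    have "F * inverse (1 - fps_const a * fps_X) = P * ((1 - fps_const a * fps_X) * inverse (1 - fps_const a * fps_X))"
      unfolding F_def by (simp add: mult_ac)
    also have "\<dots> = P" by (subst inverse_mult_eq_1') simp_all
    finally show ?thesis by simp
  qed
  have Pn: "\<And>n. P $ n = (\<Sum>i\<le>n. e i * a^(n-i))"
    by (subst PF) (simp add: mult_inv_nth e_def)
  have D: "(P - fps_trunc F k * inverse (1 - fps_const a * fps_X)) $ n = (\<Sum>i\<in>{k<..n}. e i * a^(n-i))" for k n
  proof -
    have "(P - fps_trunc F k * inverse (1 - fps_const a * fps_X)) $ n
        = (\<Sum>i\<le>n. e i * a^(n-i)) - (\<Sum>i\<le>n. (if i \<le> k then e i else 0) * a^(n-i))"
      by (simp add: Pn mult_inv_nth fps_trunc_def) (simp only: e_def)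
    also have "\<dots> = (\<Sum>i\<le>n. if k < i then e i * a^(n-i) else 0)"
      by (simp add: sum_subtractf[symmetric]) (rule sum.cong, auto)
    also have "\<dots> = (\<Sum>i\<in>{i\<in>{..n}. k < i}. e i * a^(n-i))"
      by (subst sum.inter_filter) simp_all
    also have "{i\<in>{..n}. k < i} = {k<..n}" by auto
    finally show ?thesis .
  qed
  have cn': "c j = (\<Sum>k<j. gpoly q (j-k) * q^((j-k)*k) * (\<Sum>i\<in>{k<..j}. e i * a^(j-i)))" if j: "j \<ge> 1" for j
  proof -
    have "c j = (\<Sum>k=0..min m (j - 1). gpoly q (j-k) * q^((j-k)*k) * (\<Sum>i\<in>{k<..j}. e i * a^(j-i)))"
      using cn[OF j] by (simp only: D)
    also have "\<dots> = (\<Sum>k<j. gpoly q (j-k) * q^((j-k)*k) * (\<Sum>i\<in>{k<..j}. e i * a^(j-i)))"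
    proof (rule sum.mono_neutral_left)
      show "{0..min m (j - 1)} \<subseteq> {..<j}" using j by auto
      show "\<forall>k\<in>{..<j} - {0..min m (j - 1)}. gpoly q (j-k) * q^((j-k)*k) * (\<Sum>i\<in>{k<..j}. e i * a^(j-i)) = 0"
      proof
        fix k assume "k \<in> {..<j} - {0..min m (j - 1)}"
        then have "k > m" by auto
        then have "\<forall>i\<in>{k<..j}. e i = 0" using ez by auto
        then show "gpoly q (j-k) * q^((j-k)*k) * (\<Sum>i\<in>{k<..j}. e i * a^(j-i)) = 0" by simp
      qed
    qed simp
    finally show ?thesis .
  qed
  have coeff: "(\<Sum>j\<le>n. c j * (a*q^j)^(n-j)) = P $ n" for n
    unfolding Pn by (rule key) (use c0 e0 cn' in auto)
  show ?thesis
    unfolding sums_def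
  proof (rule tendsto_fpsI)
    fix n
    show "\<forall>\<^sub>F N in sequentially. (\<Sum>j<N. fps_const (c j) * fps_X ^ j * inverse (1 - fps_const (a * q ^ j) * fps_X)) $ n = P $ n"
      unfolding eventually_sequentially
    proof (intro exI allI impI)
      fix N assume N: "N \<ge> Suc n"
      have "(\<Sum>j<N. fps_const (c j) * fps_X ^ j * inverse (1 - fps_const (a * q ^ j) * fps_X)) $ n
          = (\<Sum>j<N. if j \<le> n then c j * (a*q^j)^(n-j) else 0)"
        by (simp add: fps_sum_nth term_nth)
      also have "\<dots> = (\<Sum>j\<in>{j\<in>{..<N}. j \<le> n}. c j * (a*q^j)^(n-j))"
        by (subst sum.inter_filter) simp_all
      also have "{j\<in>{..<N}. j \<le> n} = {..n}" using N by auto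
      finally show "(\<Sum>j<N. fps_const (c j) * fps_X ^ j * inverse (1 - fps_const (a * q ^ j) * fps_X)) $ n = P $ n"
        using coeff by simp
    qed
  qed
qed

end
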